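(* Let $G$ be a connected graph of order $n\ge 3$. Then $\Gamma_{\rm cer}(G)=n-2$ if and only if $G$ is a simple diadem, a diadem, or one of the graphs $K_2+\overline{K}_{n-2}$ and $\overline{K}_2+\overline{K}_{n-2}$.
   Context: All graphs are finite and simple. A set $D\subseteq V_G$ is a dominating set of $G$ if every vertex of $V_G-D$ has a neighbor in $D$. A set $D$ is a certified dominating set of $G$ if $D$ is dominating and every vertex of $D$ has either zero or at least two neighbors in $V_G-D$; it is minimal if no proper subset is a certified dominating set. $\Gamma_{\rm cer}(G)$ is the maximum cardinality of a minimal certified dominating set. A graph is a corona if it equals $H\circ K_1$ for some graph $H$ (attach one new pendant vertex to each vertex of $H$); in a corona, a leaf is a vertex of degree one and a support is a vertex adjacent to a leaf. A simple diadem is a graph obtained from a corona by adding one new vertex and joining it to exactly one support of the corona. A diadem is a graph obtained from a corona by adding one new vertex and joining it to exactly one leaf and to the neighbor of that leaf. $F+H$ denotes the join of $F$ and $H$ (disjoint union plus all edges between them), and $\overline{K}_m$ is the edgeless graph on $m$ vertices. *)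

theory Defs
  imports Main
begin

definition graph :: "'a set \<Rightarrow> ('a \<Rightarrow> 'a \<Rightarrow> bool) \<Rightarrow> bool" where
  "graph V E \<longleftrightarrow> finite V \<and> (\<forall>x y. E x y \<longrightarrow> x \<in> V \<and> y \<in> V)
     \<and> (\<forall>x y. E x y \<longrightarrow> E y x) \<and> (\<forall>x. \<not> E x x)"

definition connected_graph :: "'a set \<Rightarrow> ('a \<Rightarrow> 'a \<Rightarrow> bool) \<Rightarrow> bool" where
  "connected_graph V E \<longleftrightarrow> (\<forall>x\<in>V. \<forall>y\<in>V. E\<^sup>*\<^sup>* x y)"

definition dominating :: "'a set \<Rightarrow> ('a \<Rightarrow> 'a \<Rightarrow> bool) \<Rightarrow> 'a set \<Rightarrow> bool" where
  "dominating V E D \<longleftrightarrow> D \<subseteq> V \<and> (\<forall>v\<in>V - D. \<exists>u\<in>D. E u v)"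

definition certified_dominating :: "'a set \<Rightarrow> ('a \<Rightarrow> 'a \<Rightarrow> bool) \<Rightarrow> 'a set \<Rightarrow> bool" where
  "certified_dominating V E D \<longleftrightarrow> dominating V E D \<and>
     (\<forall>v\<in>D. card {u \<in> V - D. E v u} = 0 \<or> card {u \<in> V - D. E v u} \<ge> 2)"

definition minimal_certified_dominating :: "'a set \<Rightarrow> ('a \<Rightarrow> 'a \<Rightarrow> bool) \<Rightarrow> 'a set \<Rightarrow> bool" where
  "minimal_certified_dominating V E D \<longleftrightarrow> certified_dominating V E D \<and>
     (\<forall>D'. D' \<subset> D \<longrightarrow> \<not> certified_dominating V E D')"

definition Gamma_cer :: "'a set \<Rightarrow> ('a \<Rightarrow> 'a \<Rightarrow> bool) \<Rightarrow> nat" where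
  "Gamma_cer V E = Max {card D | D. minimal_certified_dominating V E D}"

text \<open>The graph (V,E) equals the corona H \<circ> K1, where H = (V,E)[S] and l s is the
pendant vertex attached to s.\<close>
definition corona_with :: "'a set \<Rightarrow> ('a \<Rightarrow> 'a \<Rightarrow> bool) \<Rightarrow> 'a set \<Rightarrow> ('a \<Rightarrow> 'a) \<Rightarrow> bool" where
  "corona_with V E S l \<longleftrightarrow> S \<subseteq> V \<and> bij_betw l S (V - S) \<and>
     (\<forall>x\<in>S. \<forall>y\<in>V - S. E x y \<longleftrightarrow> y = l x) \<and>
     (\<forall>x\<in>V - S. \<forall>y\<in>V - S. \<not> E x y)"

definition is_corona :: "'a set \<Rightarrow> ('a \<Rightarrow> 'a \<Rightarrow> bool) \<Rightarrow> bool" where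
  "is_corona V E \<longleftrightarrow> (\<exists>S l. corona_with V E S l)"

definition simple_diadem :: "'a set \<Rightarrow> ('a \<Rightarrow> 'a \<Rightarrow> bool) \<Rightarrow> bool" where
  "simple_diadem V E \<longleftrightarrow> (\<exists>w\<in>V. \<exists>S l. \<exists>s\<in>S.
     corona_with (V - {w}) E S l \<and> (\<forall>u. E w u \<longleftrightarrow> u = s))"

definition diadem :: "'a set \<Rightarrow> ('a \<Rightarrow> 'a \<Rightarrow> bool) \<Rightarrow> bool" where
  "diadem V E \<longleftrightarrow> (\<exists>w\<in>V. \<exists>S l. \<exists>s\<in>S.
     corona_with (V - {w}) E S l \<and> (\<forall>u. E w u \<longleftrightarrow> u = s \<or> u = l s))"

definition join_with_independent :: "'a set \<Rightarrow> ('a \<Rightarrow> 'a \<Rightarrow> bool) \<Rightarrow> 'a set \<Rightarrow> bool" where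
  "join_with_independent V E A \<longleftrightarrow> A \<subseteq> V \<and>
     (\<forall>x\<in>A. \<forall>y\<in>V - A. E x y) \<and> (\<forall>x\<in>V - A. \<forall>y\<in>V - A. \<not> E x y)"

definition K2_join_indep :: "'a set \<Rightarrow> ('a \<Rightarrow> 'a \<Rightarrow> bool) \<Rightarrow> bool" where
  "K2_join_indep V E \<longleftrightarrow> (\<exists>a b. a \<noteq> b \<and> E a b \<and> join_with_independent V E {a, b})"

definition coK2_join_indep :: "'a set \<Rightarrow> ('a \<Rightarrow> 'a \<Rightarrow> bool) \<Rightarrow> bool" where
  "coK2_join_indep V E \<longleftrightarrow> (\<exists>a b. a \<noteq> b \<and> \<not> E a b \<and> join_with_independent V E {a, b})"

end

theory Submission
  imports Defs
begin


definition nbrs :: "'a set \<Rightarrow> ('a \<Rightarrow> 'a \<Rightarrow> bool) \<Rightarrow> 'a \<Rightarrow> 'a set" where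
  "nbrs V F r = {u\<in>V. F r u}"

definition edges_in :: "('a \<Rightarrow> 'a \<Rightarrow> bool) \<Rightarrow> 'a set \<Rightarrow> ('a \<times> 'a) set" where
  "edges_in F W = {p \<in> W \<times> W. F (fst p) (snd p)}"

lemma two_elems:
  assumes "finite A" "a \<in> A" "card A \<noteq> 1" shows "\<exists>b\<in>A. b \<noteq> a"
proof (rule ccontr)
  assume "\<not> (\<exists>b\<in>A. b \<noteq> a)"
  then have "A = {a}" using assms(2) by blast
  then show False using assms(3) by simp
qed

lemma caseC:
  fixes F :: "'a \<Rightarrow> 'a \<Rightarrow> bool"
  assumes fin: "finite V" and sym: "\<forall>x y. F x y \<longrightarrow> F y x" and irr: "\<forall>x. \<not> F x x"
  and deg: "\<forall>r\<in>V - X. card (nbrs V F r) \<noteq> 1"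
  and r0: "r0 \<in> V - X" "u0 \<in> V" "F r0 u0"
  shows "\<exists>W. W \<noteq> {} \<and> W \<subseteq> V - X \<and> (\<forall>w\<in>W. \<exists>u\<in>V-W. F w u) \<and>
     (\<forall>v\<in>V-W-X. card {u\<in>W. F v u} \<noteq> 1)"
proof -
  define P where "P = {W. W \<noteq> {} \<and> W \<subseteq> V - X \<and> (\<forall>w\<in>W. \<exists>u\<in>V-W. F w u)}"
  have r0u0: "r0 \<noteq> u0" using irr r0 by auto
  have "{r0} \<in> P" unfolding P_def using r0 r0u0 by auto
  have "P \<subseteq> Pow V" unfolding P_def by auto
  then have finP: "finite P" using fin by (meson finite_Pow_iff finite_subset)
  define m where "m = Max (card ` P)"
  have "m \<in> card ` P" unfolding m_def using finP \<open>{r0} \<in> P\<close> by (intro Max_in) auto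
  then obtain W1 where W1: "W1 \<in> P" "card W1 = m" by auto
  have maxc: "\<And>W. W \<in> P \<Longrightarrow> card W \<le> m" unfolding m_def using finP by auto
  obtain W where W: "W \<in> P" "card W = m"
    and minW: "\<And>W'. W' \<in> P \<Longrightarrow> card W' = m \<Longrightarrow> card (edges_in F W) \<le> card (edges_in F W')"
    using ex_has_least_nat[of "\<lambda>W. W \<in> P \<and> card W = m" W1 "\<lambda>W. card (edges_in F W)"] W1 by blast
  have WV: "W \<subseteq> V - X" and Wne: "W \<noteq> {}" and W1c: "\<forall>w\<in>W. \<exists>u\<in>V-W. F w u" using W(1) unfolding P_def by auto
  have finW: "finite W" using WV fin finite_subset by blast
  have "\<forall>v\<in>V-W-X. card {u\<in>W. F v u} \<noteq> 1"
  proof (rule ballI, rule notI)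
    fix v assume v: "v \<in> V - W - X" and c1: "card {u\<in>W. F v u} = 1"
    then obtain w0 where w0: "{u\<in>W. F v u} = {w0}" using card_1_singletonE by blast
    have w0W: "w0 \<in> W" and Fvw0: "F v w0" using w0 by auto
    have onlyw0: "\<And>w. w \<in> W \<Longrightarrow> F v w \<Longrightarrow> w = w0" using w0 by auto
    have "w0 \<in> nbrs V F v" using w0W WV Fvw0 unfolding nbrs_def by auto
    moreover have "finite (nbrs V F v)" using fin unfolding nbrs_def by auto
    moreover have "card (nbrs V F v) \<noteq> 1" using deg v by auto
    ultimately have "\<exists>u1\<in>nbrs V F v. u1 \<noteq> w0" using two_elems by metis
    then obtain u1 where u1: "u1 \<in> V" "F v u1" "u1 \<noteq> w0" unfolding nbrs_def by auto
    have u1W: "u1 \<notin> W" using u1 onlyw0 by auto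
    have u1v: "u1 \<noteq> v" using u1 irr by auto
    show False
    proof (cases "\<exists>u\<in>V - W. u \<noteq> v \<and> F w0 u")
      case True
      then obtain u where u: "u \<in> V - W" "u \<noteq> v" "F w0 u" by auto
      have "insert v W \<in> P" unfolding P_def
      proof (intro CollectI conjI)
        show "insert v W \<noteq> {}" by simp
        show "insert v W \<subseteq> V - X" using v WV by auto
        show "\<forall>w\<in>insert v W. \<exists>u\<in>V - insert v W. F w u"
        proof
          fix w assume "w \<in> insert v W"
          then consider "w = v" | "w = w0" | "w \<in> W" "w \<noteq> w0" by auto
          then show "\<exists>u\<in>V - insert v W. F w u"
          proof cases
            case 1 then show ?thesis using u1 u1W u1v by auto
          next
            case 2 then show ?thesis using u by auto
          next
            case 3
            then obtain u' where u': "u' \<in> V - W" "F w u'" using W1c by auto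
            have "F u' w" using sym u'(2) by blast
            then have "u' \<noteq> v" using 3 onlyw0 by auto
            then show ?thesis using u' by auto
          qed
        qed
      qed
      then have "card (insert v W) \<le> m" by (rule maxc)
      moreover have "card (insert v W) = m + 1" using v finW W(2) by auto
      ultimately show False by simp
    next
      case False
      then have w0out: "\<And>u. u \<in> V - W \<Longrightarrow> F w0 u \<Longrightarrow> u = v" by auto
      have "w0 \<in> V - X" "w0 \<noteq> v" using w0W WV v by auto
      have "F w0 v" using sym Fvw0 by blast
      then have "v \<in> nbrs V F w0" using v unfolding nbrs_def by auto
      moreover have "finite (nbrs V F w0)" using fin unfolding nbrs_def by auto
      moreover have "card (nbrs V F w0) \<noteq> 1" using deg \<open>w0 \<in> V - X\<close> by auto
      ultimately have "\<exists>u2\<in>nbrs V F w0. u2 \<noteq> v" using two_elems by metis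
      then obtain u2 where u2: "u2 \<in> V" "F w0 u2" "u2 \<noteq> v" unfolding nbrs_def by auto
      have u2W: "u2 \<in> W" using u2 w0out by auto
      have u2w0: "u2 \<noteq> w0" using u2 irr by auto
      define W' where "W' = insert v (W - {w0})"
      have W'P: "W' \<in> P" unfolding P_def W'_def
      proof (intro CollectI conjI)
        show "insert v (W - {w0}) \<noteq> {}" by simp
        show "insert v (W - {w0}) \<subseteq> V - X" using v WV by auto
        show "\<forall>w\<in>insert v (W - {w0}). \<exists>u\<in>V - insert v (W - {w0}). F w u"
        proof
          fix w assume "w \<in> insert v (W - {w0})"
          then consider "w = v" | "w \<in> W" "w \<noteq> w0" by auto
          then show "\<exists>u\<in>V - insert v (W - {w0}). F w u"
          proof cases
            case 1 then show ?thesis using Fvw0 \<open>w0 \<noteq> v\<close> w0W WV by auto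
          next
            case 2
            then obtain u' where u': "u' \<in> V - W" "F w u'" using W1c by auto
            have "F u' w" using sym u'(2) by blast
            then have "u' \<noteq> v" using 2 onlyw0 by auto
            then show ?thesis using u' by auto
          qed
        qed
      qed
      have "card (W - {w0}) = card W - 1" using w0W finW by simp
      moreover have "card W \<ge> 1" using w0W finW card_0_eq by fastforce
      moreover have "v \<notin> W - {w0}" using v by auto
      ultimately have cW': "card W' = m" unfolding W'_def using finW W(2) by simp
      have sub: "edges_in F W' \<subseteq> edges_in F W - {(w0,u2)}"
      proof
        fix p assume p: "p \<in> edges_in F W'"
        then obtain a b where ab: "p = (a,b)" "a \<in> W'" "b \<in> W'" "F a b" unfolding edges_in_def by auto
        have "a \<noteq> v"
        proof
          assume "a = v"
          then have "b \<in> W - {w0}" using ab irr unfolding W'_def by auto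
          then show False using onlyw0 ab \<open>a = v\<close> by auto
        qed
        moreover have "b \<noteq> v"
        proof
          assume "b = v"
          then have "a \<in> W - {w0}" using ab irr unfolding W'_def by auto
          moreover have "F v a" using sym ab(4) \<open>b = v\<close> by blast
          ultimately show False using onlyw0 by auto
        qed
        ultimately have "a \<in> W - {w0}" "b \<in> W - {w0}" using ab unfolding W'_def by auto
        then show "p \<in> edges_in F W - {(w0,u2)}" using ab unfolding edges_in_def by auto
      qed
      have "(w0,u2) \<in> edges_in F W" using w0W u2W u2 unfolding edges_in_def by auto
      moreover have "edges_in F W \<subseteq> W \<times> W" unfolding edges_in_def by auto
      then have "finite (edges_in F W)" using finW by (meson finite_SigmaI finite_subset)
      ultimately have "card (edges_in F W') < card (edges_in F W)"
        using sub by (metis card_Diff1_less card_mono finite_Diff order_le_less_trans)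
      moreover have "card (edges_in F W) \<le> card (edges_in F W')" using minW W'P cW' by auto
      ultimately show False by simp
    qed
  qed
  then show ?thesis using WV Wne W1c by blast
qed

lemma core:
  fixes F :: "'a \<Rightarrow> 'a \<Rightarrow> bool"
  assumes fin: "finite V" and sym: "\<forall>x y. F x y \<longrightarrow> F y x" and irr: "\<forall>x. \<not> F x x"
  and nomin: "\<forall>W. W \<noteq> {} \<and> W \<subseteq> V - X \<and> (\<forall>w\<in>W. \<exists>u\<in>V-W. F w u) \<longrightarrow>
      (\<exists>v\<in>V-W-X. card {u\<in>W. F v u} = 1)"
  shows "\<exists>S l. S \<subseteq> V - X \<and> l ` S \<subseteq> V - X - S \<and> inj_on l S \<and>
     (\<forall>t\<in>S. \<forall>u\<in>V. F (l t) u \<longleftrightarrow> u = t) \<and> (\<forall>r\<in>V - X - S - l ` S. \<forall>u\<in>V. \<not> F r u)"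
  using nomin
proof (induction "card (V - X)" arbitrary: X rule: less_induct)
  case less
  note nm = less.prems
  have nmW: "\<And>W. W \<noteq> {} \<Longrightarrow> W \<subseteq> V - X \<Longrightarrow> (\<forall>w\<in>W. \<exists>u\<in>V-W. F w u) \<Longrightarrow>
     \<exists>v\<in>V-W-X. card {u\<in>W. F v u} = 1"
  proof -
    fix W assume "W \<noteq> {}" "W \<subseteq> V - X" "\<forall>w\<in>W. \<exists>u\<in>V-W. F w u"
    then show "\<exists>v\<in>V-W-X. card {u\<in>W. F v u} = 1" using nm[rule_format, of W] by simp
  qed
  show ?case
  proof (cases "\<forall>r\<in>V-X. \<forall>u\<in>V. \<not> F r u")
    case True
    then show ?thesis by (intro exI[of _ "{}"] exI[of _ id]) auto
  next
    case False
    then obtain r0 u0 where r0: "r0 \<in> V - X" "u0 \<in> V" "F r0 u0" by auto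
    show ?thesis
    proof (cases "\<exists>r\<in>V-X. card (nbrs V F r) = 1")
      case False
      then have "\<forall>r\<in>V - X. card (nbrs V F r) \<noteq> 1" by auto
      from caseC[OF fin sym irr this r0] obtain W where
        W: "W \<noteq> {}" "W \<subseteq> V - X" "\<forall>w\<in>W. \<exists>u\<in>V-W. F w u" "\<forall>v\<in>V-W-X. card {u\<in>W. F v u} \<noteq> 1"
        by blast
      from nmW[OF W(1-3)] W(4) show ?thesis by blast
    next
      case True
      then obtain r where r: "r \<in> V - X" "card (nbrs V F r) = 1" by auto
      then obtain t where t: "nbrs V F r = {t}" using card_1_singletonE by blast
      then have tV: "t \<in> V" and Frt: "F r t" and rnb: "\<And>u. u \<in> V \<Longrightarrow> F r u \<longleftrightarrow> u = t"
        unfolding nbrs_def by auto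
      have rt: "r \<noteq> t" using Frt irr by auto
      have Ftr: "F t r" using sym Frt by blast
      have onlyt: "\<And>v. v \<in> V \<Longrightarrow> F v r \<Longrightarrow> v = t"
      proof -
        fix v assume "v \<in> V" "F v r"
        then have "F r v" using sym by blast
        then show "v = t" using rnb \<open>v \<in> V\<close> by auto
      qed
      show ?thesis
      proof (cases "t \<in> X")
        case True
        have "\<forall>w\<in>{r}. \<exists>u\<in>V-{r}. F w u"
          using r tV Frt rt by auto
        from nmW[OF _ _ this] obtain v where v: "v \<in> V - {r} - X" "card {u\<in>{r}. F v u} = 1" using r by blast
        have "F v r" proof (rule ccontr) assume "\<not> F v r" then have "{u\<in>{r}. F v u} = {}" by auto then show False using v(2) by (metis card.empty zero_neq_one) qed
        then have "v = t" using onlyt v by auto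
        then show ?thesis using v True by auto
      next
        case False
        define X' where "X' = X \<union> {r, t}"
        have lt: "card (V - X') < card (V - X)"
          unfolding X'_def using r fin by (intro psubset_card_mono) auto
        have nm': "\<forall>W. W \<noteq> {} \<and> W \<subseteq> V - X' \<and> (\<forall>w\<in>W. \<exists>u\<in>V-W. F w u) \<longrightarrow>
            (\<exists>v\<in>V-W-X'. card {u\<in>W. F v u} = 1)"
        proof (intro allI impI)
          fix W0 assume W0: "W0 \<noteq> {} \<and> W0 \<subseteq> V - X' \<and> (\<forall>w\<in>W0. \<exists>u\<in>V-W0. F w u)"
          show "\<exists>v\<in>V-W0-X'. card {u\<in>W0. F v u} = 1"
          proof (rule ccontr)
            assume ncon: "\<not> (\<exists>v\<in>V-W0-X'. card {u\<in>W0. F v u} = 1)"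
            have rW0: "r \<notin> W0" "t \<notin> W0" using W0 unfolding X'_def by auto
            have W0sub: "W0 \<subseteq> V" using W0 by blast
            have rcnt: "{u\<in>W0. F r u} = {}" using rnb rW0 W0 by auto
            show False
            proof (cases "card {u\<in>W0. F t u} = 1")
              case False
              have "\<forall>v\<in>V-W0-X. card {u\<in>W0. F v u} \<noteq> 1"
              proof
                fix v assume v: "v \<in> V - W0 - X"
                show "card {u\<in>W0. F v u} \<noteq> 1"
                proof (cases "v \<in> X'")
                  case True
                  then have "v = r \<or> v = t" using v unfolding X'_def by auto
                  then show ?thesis using rcnt False by (metis card.empty zero_neq_one)
                next
                  case False
                  then show ?thesis using ncon v by auto
                qed
              qed
              moreover have "W0 \<subseteq> V - X" using W0 unfolding X'_def by auto
              ultimately show False using nmW[of W0] W0 by blast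
            next
              case True
              define W where "W = insert r W0"
              have WW: "W \<noteq> {} \<and> W \<subseteq> V - X \<and> (\<forall>w\<in>W. \<exists>u\<in>V-W. F w u)"
              proof (intro conjI)
                show "W \<noteq> {}" unfolding W_def by simp
                show "W \<subseteq> V - X" unfolding W_def using W0 r unfolding X'_def by auto
                show "\<forall>w\<in>W. \<exists>u\<in>V-W. F w u"
                proof
                  fix w assume "w \<in> W"
                  then consider "w = r" | "w \<in> W0" unfolding W_def by auto
                  then show "\<exists>u\<in>V-W. F w u"
                  proof cases
                    case 1 then show ?thesis using tV Frt rt rW0 unfolding W_def by auto
                  next
                    case 2
                    then obtain u where u: "u \<in> V - W0" "F w u" using W0 by auto
                    have "u \<noteq> r"
                    proof
                      assume "u = r"
                      then have "w = t" using onlyt u 2 W0 by auto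
                      then show False using rW0 2 by auto
                    qed
                    then show ?thesis using u unfolding W_def by auto
                  qed
                qed
              qed
              have "\<forall>v\<in>V-W-X. card {u\<in>W. F v u} \<noteq> 1"
              proof
                fix v assume v: "v \<in> V - W - X"
                show "card {u\<in>W. F v u} \<noteq> 1"
                proof (cases "v = t")
                  case True
                  have "{u\<in>W. F v u} = insert r {u\<in>W0. F t u}" unfolding W_def using True Ftr by auto
                  moreover have "finite {u\<in>W0. F t u}" using W0sub fin by (metis (no_types, lifting) finite_subset mem_Collect_eq subsetD subsetI)
                  ultimately show ?thesis using True \<open>card {u\<in>W0. F t u} = 1\<close> rW0 by simp
                next
                  case False
                  have "\<not> F v r" using onlyt v False by auto
                  then have "{u\<in>W. F v u} = {u\<in>W0. F v u}" unfolding W_def by auto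
                  moreover have "v \<in> V - W0 - X'" using v False unfolding W_def X'_def by auto
                  ultimately show ?thesis using ncon by auto
                qed
              qed
              then show False using nmW[of W] WW by blast
            qed
          qed
        qed
        from less.hyps[OF lt nm'] obtain S0 l0 where IH:
          "S0 \<subseteq> V - X'" "l0 ` S0 \<subseteq> V - X' - S0" "inj_on l0 S0"
          "\<forall>t\<in>S0. \<forall>u\<in>V. F (l0 t) u \<longleftrightarrow> u = t" "\<forall>r\<in>V - X' - S0 - l0 ` S0. \<forall>u\<in>V. \<not> F r u"
          by blast
        define S where "S = insert t S0"
        define l where "l = l0(t := r)"
        have tS0: "t \<notin> S0" "r \<notin> S0" using IH(1) unfolding X'_def by auto
        have lS0: "\<And>s. s \<in> S0 \<Longrightarrow> l s = l0 s" unfolding l_def using tS0 by auto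
        have lS: "l ` S = insert r (l0 ` S0)" unfolding S_def l_def using tS0
          by (auto simp: image_iff)
        have l0S0: "\<And>s. s \<in> S0 \<Longrightarrow> l0 s \<noteq> r \<and> l0 s \<noteq> t" using IH(2) unfolding X'_def by auto
        show ?thesis
        proof (intro exI[of _ S] exI[of _ l] conjI)
          show "S \<subseteq> V - X" unfolding S_def using IH(1) tV False unfolding X'_def by auto
          show "l ` S \<subseteq> V - X - S"
          proof -
            have "insert r (l0 ` S0) \<subseteq> V - X - S" unfolding S_def using IH(2) r rt tS0 unfolding X'_def by auto
            then show ?thesis using lS by simp
          qed
          show "inj_on l S" unfolding S_def
          proof (rule inj_on_insert[THEN iffD2], intro conjI)
            show "inj_on l S0" using IH(3) lS0 by (metis inj_on_cong)
            show "l t \<notin> l ` (S0 - {t})" using l0S0 lS0 unfolding l_def by auto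
          qed
          show "\<forall>s\<in>S. \<forall>u\<in>V. F (l s) u \<longleftrightarrow> u = s"
          proof
            fix s assume "s \<in> S"
            then consider "s = t" | "s \<in> S0" unfolding S_def by auto
            then show "\<forall>u\<in>V. F (l s) u \<longleftrightarrow> u = s"
            proof cases
              case 1 then show ?thesis using rnb unfolding l_def by auto
            next
              case 2 then show ?thesis using IH(4) lS0 by auto
            qed
          qed
          show "\<forall>q\<in>V - X - S - l ` S. \<forall>u\<in>V. \<not> F q u"
          proof
            fix q assume "q \<in> V - X - S - l ` S"
            then have "q \<in> V - X - S - insert r (l0 ` S0)" using lS by simp
            then have "q \<in> V - X' - S0 - l0 ` S0" unfolding S_def X'_def by auto
            then show "\<forall>u\<in>V. \<not> F q u" using IH(5) by auto
          qed
        qed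
      qed
    qed
  qed
qed



lemma gsym: "graph V E \<Longrightarrow> E x y \<Longrightarrow> E y x" unfolding graph_def by blast
lemma girr: "graph V E \<Longrightarrow> \<not> E x x" unfolding graph_def by blast
lemma gV1: "graph V E \<Longrightarrow> E x y \<Longrightarrow> x \<in> V" unfolding graph_def by blast
lemma gV2: "graph V E \<Longrightarrow> E x y \<Longrightarrow> y \<in> V" unfolding graph_def by blast
lemma gfin: "graph V E \<Longrightarrow> finite V" unfolding graph_def by blast

lemma cert_V: "graph V E \<Longrightarrow> certified_dominating V E V"
  unfolding certified_dominating_def dominating_def by auto

lemma cert_sub: "certified_dominating V E D \<Longrightarrow> D \<subseteq> V"
  unfolding certified_dominating_def dominating_def by auto

lemma no_out1:
  assumes G: "graph V E" and C: "certified_dominating V E D" and x: "V - D = {x}"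
  shows False
proof -
  have "x \<in> V - D" using x by auto
  then obtain u where u: "u \<in> D" "E u x" using C unfolding certified_dominating_def dominating_def by blast
  have "{u' \<in> V - D. E u u'} = {x}" using x u by auto
  moreover have "card {u' \<in> V - D. E u u'} = 0 \<or> card {u' \<in> V - D. E u u'} \<ge> 2"
    using C u unfolding certified_dominating_def by blast
  ultimately show False by simp
qed

lemma exists_mcd:
  assumes G: "graph V E"
  shows "\<exists>D. minimal_certified_dominating V E D"
proof -
  obtain D where D: "certified_dominating V E D"
    and m: "\<And>D'. certified_dominating V E D' \<Longrightarrow> card D \<le> card D'"
    using ex_has_least_nat[of "certified_dominating V E" V card] cert_V[OF G] by blast
  have fD: "finite D" using cert_sub[OF D] gfin[OF G] finite_subset by blast
  have "\<forall>D'. D' \<subset> D \<longrightarrow> \<not> certified_dominating V E D'"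
  proof (intro allI impI notI)
    fix D' assume "D' \<subset> D" "certified_dominating V E D'"
    then have "card D' < card D" using fD psubset_card_mono by blast
    then show False using m \<open>certified_dominating V E D'\<close> by fastforce
  qed
  then show ?thesis using D unfolding minimal_certified_dominating_def by blast
qed

lemma mcd_le:
  assumes G: "graph V E" and n: "card V \<ge> 3"
    and D: "minimal_certified_dominating V E D" "card D = card V - 2"
    and D': "minimal_certified_dominating V E D'"
  shows "card D' \<le> card V - 2"
proof -
  have fV: "finite V" using gfin[OF G] .
  have C': "certified_dominating V E D'" using D' unfolding minimal_certified_dominating_def by blast
  have sub': "D' \<subseteq> V" using cert_sub[OF C'] .
  have le: "card D' \<le> card V" using sub' fV card_mono by blast
  have "card D' \<noteq> card V"
  proof
    assume "card D' = card V"
    then have "D' = V" using sub' fV card_subset_eq by blast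
    moreover have CD: "certified_dominating V E D" using D(1) unfolding minimal_certified_dominating_def by blast
    moreover have "D \<subset> V" using cert_sub[OF CD] D(2) n by auto
    ultimately show False using D' unfolding minimal_certified_dominating_def by blast
  qed
  moreover have "card D' \<noteq> card V - 1"
  proof
    assume a: "card D' = card V - 1"
    have "card (V - D') = 1" using card_Diff_subset[OF finite_subset[OF sub' fV] sub'] a n by simp
    then obtain x where "V - D' = {x}" using card_1_singletonE by blast
    then show False using no_out1[OF G C'] by blast
  qed
  ultimately show ?thesis using le by linarith
qed

lemma Gamma_iff:
  assumes G: "graph V E" and n: "card V \<ge> 3"
  shows "Gamma_cer V E = card V - 2 \<longleftrightarrow> (\<exists>D. minimal_certified_dominating V E D \<and> card D = card V - 2)"
proof -
  define M where "M = {card D | D. minimal_certified_dominating V E D}"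
  have fV: "finite V" using gfin[OF G] .
  have Msub: "M \<subseteq> {..card V}"
  proof
    fix k assume "k \<in> M"
    then obtain D where "minimal_certified_dominating V E D" "k = card D" unfolding M_def by blast
    then have "D \<subseteq> V" using cert_sub unfolding minimal_certified_dominating_def by blast
    then show "k \<in> {..card V}" using \<open>k = card D\<close> fV card_mono by auto
  qed
  then have fM: "finite M" using finite_subset by blast
  have neM: "M \<noteq> {}" using exists_mcd[OF G] unfolding M_def by blast
  have GM: "Gamma_cer V E = Max M" unfolding Gamma_cer_def M_def by simp
  show ?thesis
  proof
    assume "Gamma_cer V E = card V - 2"
    then have "card V - 2 \<in> M" using Max_in[OF fM neM] GM by simp
    then show "\<exists>D. minimal_certified_dominating V E D \<and> card D = card V - 2" unfolding M_def by force
  next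
    assume "\<exists>D. minimal_certified_dominating V E D \<and> card D = card V - 2"
    then obtain D where D: "minimal_certified_dominating V E D" "card D = card V - 2" by blast
    have "card V - 2 \<in> M" using D unfolding M_def by force
    moreover have "\<forall>k\<in>M. k \<le> card V - 2" using mcd_le[OF G n D] unfolding M_def by force
    ultimately have "Max M = card V - 2" using fM by (intro Max_eqI) auto
    then show "Gamma_cer V E = card V - 2" using GM by simp
  qed
qed

lemma pair_iff:
  assumes G: "graph V E" and n: "card V \<ge> 3"
  shows "(\<exists>D. minimal_certified_dominating V E D \<and> card D = card V - 2) \<longleftrightarrow>
    (\<exists>x y. x \<in> V \<and> y \<in> V \<and> x \<noteq> y \<and> minimal_certified_dominating V E (V - {x, y}))"
proof
  assume "\<exists>D. minimal_certified_dominating V E D \<and> card D = card V - 2"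
  then obtain D where D: "minimal_certified_dominating V E D" "card D = card V - 2" by blast
  have fV: "finite V" using gfin[OF G] .
  have sub: "D \<subseteq> V" using D(1) cert_sub unfolding minimal_certified_dominating_def by blast
  have "card (V - D) = 2" using card_Diff_subset[OF finite_subset[OF sub fV] sub] D(2) n sub fV
    by (simp add: card_mono)
  then obtain x y where xy: "V - D = {x, y}" "x \<noteq> y" by (auto simp: card_2_iff)
  have "D = V - {x, y}" using xy(1) sub by blast
  then show "\<exists>x y. x \<in> V \<and> y \<in> V \<and> x \<noteq> y \<and> minimal_certified_dominating V E (V - {x, y})"
    using D(1) xy by blast
next
  assume "\<exists>x y. x \<in> V \<and> y \<in> V \<and> x \<noteq> y \<and> minimal_certified_dominating V E (V - {x, y})"
  then obtain x y where "x \<in> V" "y \<in> V" "x \<noteq> y" "minimal_certified_dominating V E (V - {x, y})" by blast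
  moreover have "card (V - {x, y}) = card V - 2" using calculation gfin[OF G] by (simp add: card_Diff_subset)
  ultimately show "\<exists>D. minimal_certified_dominating V E D \<and> card D = card V - 2" by blast
qed

lemma cert_pair:
  assumes G: "graph V E" and xy: "x \<in> V" "y \<in> V" "x \<noteq> y"
  shows "certified_dominating V E (V - {x,y}) \<longleftrightarrow>
    (\<exists>u\<in>V-{x,y}. E u x) \<and> (\<exists>u\<in>V-{x,y}. E u y) \<and> (\<forall>v\<in>V-{x,y}. E v x \<longleftrightarrow> E v y)"
proof -
  have VD: "V - (V - {x,y}) = {x,y}" using xy by auto
  have cnt: "\<And>v. card {u \<in> {x,y}. E v u} = (if E v x then 1 else 0) + (if E v y then 1 else 0)"
  proof -
    fix v
    show "card {u \<in> {x,y}. E v u} = (if E v x then 1 else 0) + (if E v y then 1 else 0)"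
    proof (cases "E v x"; cases "E v y")
      assume "E v x" "E v y"
      then have "{u \<in> {x,y}. E v u} = {x,y}" by auto
      then show ?thesis using xy(3) \<open>E v x\<close> \<open>E v y\<close> by simp
    next
      assume "E v x" "\<not> E v y"
      then have "{u \<in> {x,y}. E v u} = {x}" by auto
      then show ?thesis using \<open>E v x\<close> \<open>\<not> E v y\<close> by simp
    next
      assume "\<not> E v x" "E v y"
      then have "{u \<in> {x,y}. E v u} = {y}" by auto
      then show ?thesis using \<open>\<not> E v x\<close> \<open>E v y\<close> by simp
    next
      assume "\<not> E v x" "\<not> E v y"
      then have "{u \<in> {x,y}. E v u} = {}" by auto
      then show ?thesis using \<open>\<not> E v x\<close> \<open>\<not> E v y\<close> by simp
    qed
  qed
  show ?thesis unfolding certified_dominating_def dominating_def VD using cnt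
    by (auto split: if_splits)
qed



lemma join_pair:
  assumes G: "graph V E" and n: "card V \<ge> 3" and ab: "a \<noteq> b" and J: "join_with_independent V E {a, b}"
  shows "\<exists>x y. x \<in> V \<and> y \<in> V \<and> x \<noteq> y \<and> minimal_certified_dominating V E (V - {x, y})"
proof -
  have abV: "a \<in> V" "b \<in> V" using J unfolding join_with_independent_def by auto
  have adj: "\<And>p q. p \<in> {a,b} \<Longrightarrow> q \<in> V - {a,b} \<Longrightarrow> E p q" using J unfolding join_with_independent_def by blast
  have ind: "\<And>p q. p \<in> V - {a,b} \<Longrightarrow> q \<in> V - {a,b} \<Longrightarrow> \<not> E p q" using J unfolding join_with_independent_def by blast
  have "card (V - {a,b}) = card V - 2" using abV ab gfin[OF G] by (simp add: card_Diff_subset)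
  then have "card (V - {a,b}) > 0" using n by simp
  then have "V - {a,b} \<noteq> {}" by (metis card.empty less_irrefl)
  then obtain c where c: "c \<in> V - {a,b}" by blast
  have C: "certified_dominating V E (V - {a,b})"
  proof (subst cert_pair[OF G abV ab], intro conjI)
    show "\<exists>u\<in>V-{a,b}. E u a" using c adj[of a c] gsym[OF G] by blast
    show "\<exists>u\<in>V-{a,b}. E u b" using c adj[of b c] gsym[OF G] by blast
    show "\<forall>v\<in>V-{a,b}. E v a \<longleftrightarrow> E v b"
    proof
      fix v assume "v \<in> V - {a,b}"
      then have "E a v" "E b v" using adj by auto
      then show "E v a \<longleftrightarrow> E v b" using gsym[OF G] by blast
    qed
  qed
  have "\<forall>D'. D' \<subset> V - {a,b} \<longrightarrow> \<not> certified_dominating V E D'"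
  proof (intro allI impI notI)
    fix D' assume D': "D' \<subset> V - {a,b}" "certified_dominating V E D'"
    then obtain c where c: "c \<in> V - {a,b}" "c \<notin> D'" by blast
    then obtain u where u: "u \<in> D'" "E u c" using D'(2) unfolding certified_dominating_def dominating_def by blast
    have "u \<in> V - {a,b}" using u D'(1) by blast
    then show False using ind[OF _ c(1)] u by blast
  qed
  then show ?thesis using C abV ab unfolding minimal_certified_dominating_def by blast
qed

lemma dia_pair:
  assumes G: "graph V E" and wV: "w \<in> V" and sS: "s \<in> S"
    and cor: "corona_with (V - {w}) E S l"
    and ws: "E w s" and wn: "\<And>u. E w u \<Longrightarrow> u = s \<or> u = l s"
  shows "\<exists>x y. x \<in> V \<and> y \<in> V \<and> x \<noteq> y \<and> minimal_certified_dominating V E (V - {x, y})"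
proof -
  have SV: "S \<subseteq> V - {w}" and bij: "bij_betw l S (V - {w} - S)"
    and SL: "\<And>a b. a \<in> S \<Longrightarrow> b \<in> V - {w} - S \<Longrightarrow> E a b \<longleftrightarrow> b = l a"
    and LL: "\<And>a b. a \<in> V - {w} - S \<Longrightarrow> b \<in> V - {w} - S \<Longrightarrow> \<not> E a b"
    using cor unfolding corona_with_def by blast+
  have inj: "inj_on l S" and img: "l ` S = V - {w} - S" using bij unfolding bij_betw_def by auto
  have lS: "\<And>t. t \<in> S \<Longrightarrow> l t \<in> V - {w} - S" using img by blast
  have ltt: "\<And>t. t \<in> S \<Longrightarrow> E t (l t)" using SL lS by blast
  have leafn: "\<And>t u. t \<in> S \<Longrightarrow> E (l t) u \<Longrightarrow> u = t \<or> (u = w \<and> t = s)"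
  proof -
    fix t u assume t: "t \<in> S" and e: "E (l t) u"
    have uV: "u \<in> V" using gV2[OF G e] .
    have eu: "E u (l t)" using gsym[OF G e] .
    show "u = t \<or> (u = w \<and> t = s)"
    proof (cases "u = w")
      case True
      then have "l t = s \<or> l t = l s" using wn eu by blast
      moreover have "l t \<noteq> s" using lS[OF t] sS by blast
      ultimately have "t = s" using inj t sS inj_on_eq_iff by metis
      then show ?thesis using True by blast
    next
      case False
      show ?thesis
      proof (cases "u \<in> S")
        case True
        then have "l t = l u" using SL[OF True lS[OF t]] eu by blast
        then show ?thesis using inj t True inj_on_eq_iff by metis
      next
        case False
        then have "u \<in> V - {w} - S" using uV \<open>u \<noteq> w\<close> by blast
        then show ?thesis using LL[OF lS[OF t]] e by blast
      qed
    qed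
  qed
  have ls: "l s \<in> V" "l s \<noteq> w" "l s \<noteq> s" "l s \<notin> S" using lS[OF sS] sS by auto
  have sV: "s \<in> V" "s \<noteq> w" using SV sS by auto
  have C: "certified_dominating V E (V - {w, l s})"
  proof (subst cert_pair[OF G wV ls(1) ls(2)[symmetric]], intro conjI)
    have sD: "s \<in> V - {w, l s}" using sV ls by auto
    show "\<exists>u\<in>V-{w, l s}. E u w" using sD gsym[OF G ws] by (rule bexI[rotated])
    show "\<exists>u\<in>V-{w, l s}. E u (l s)" using sD ltt[OF sS] by (rule bexI[rotated])
    show "\<forall>v\<in>V-{w, l s}. E v w \<longleftrightarrow> E v (l s)"
    proof
      fix v assume v: "v \<in> V - {w, l s}"
      show "E v w \<longleftrightarrow> E v (l s)"
      proof
        assume "E v w"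
        have "v = s \<or> v = l s" by (rule wn[OF gsym[OF G \<open>E v w\<close>]])
        then have "v = s" using v by auto
        then show "E v (l s)" using ltt[OF sS] by simp
      next
        assume "E v (l s)"
        have "v = s \<or> (v = w \<and> s = s)" by (rule leafn[OF sS gsym[OF G \<open>E v (l s)\<close>]])
        then have "v = s" using v by auto
        then show "E v w" using gsym[OF G ws] by simp
      qed
    qed
  qed
  have "\<forall>D'. D' \<subset> V - {w, l s} \<longrightarrow> \<not> certified_dominating V E D'"
  proof (intro allI impI notI)
    fix D' assume D': "D' \<subset> V - {w, l s}" "certified_dominating V E D'"
    have dom: "\<And>v. v \<in> V - D' \<Longrightarrow> \<exists>u\<in>D'. E u v" using D'(2) unfolding certified_dominating_def dominating_def by blast
    have cnt: "\<And>v. v \<in> D' \<Longrightarrow> card {u \<in> V - D'. E v u} = 0 \<or> card {u \<in> V - D'. E v u} \<ge> 2"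
      using D'(2) unfolding certified_dominating_def by blast
    have wD: "w \<notin> D'" "l s \<notin> D'" using D'(1) by auto
    have SD: "S \<subseteq> D'"
    proof
      fix t assume t: "t \<in> S"
      show "t \<in> D'"
      proof (rule ccontr)
        assume tn: "t \<notin> D'"
        show False
        proof (cases "t = s")
          case True
          obtain u where u: "u \<in> D'" "E u w" using dom[of w] wD wV by blast
          then have "u = s \<or> u = l s" using wn[OF gsym[OF G u(2)]] by blast
          then show False using u tn True wD by blast
        next
          case False
          have ltV: "l t \<in> V" "l t \<noteq> t" using lS[OF t] t by auto
          have nb: "\<And>u. E (l t) u \<Longrightarrow> u = t" using leafn[OF t] False by blast
          show False
          proof (cases "l t \<in> D'")
            case True
            have "{u \<in> V - D'. E (l t) u} = {t}"
              using nb tn ltt[OF t] gsym[OF G] SV t by blast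
            then show False using cnt[OF True] by simp
          next
            case False
            then obtain u where "u \<in> D'" "E u (l t)" using dom[of "l t"] ltV by blast
            then show False using nb[OF gsym[OF G \<open>E u (l t)\<close>]] tn by blast
          qed
        qed
      qed
    qed
    obtain c where c: "c \<in> V - {w, l s}" "c \<notin> D'" using D'(1) by blast
    then have "c \<in> V - {w} - S" using SD by blast
    then obtain t where t: "t \<in> S" "c = l t" using img by blast
    have ts: "t \<noteq> s" using t c by blast
    have tD: "t \<in> D'" using SD t by blast
    have "{u \<in> V - D'. E t u} = {c}"
    proof
      show "{c} \<subseteq> {u \<in> V - D'. E t u}" using c t ltt by blast
      show "{u \<in> V - D'. E t u} \<subseteq> {c}"
      proof
        fix u assume u: "u \<in> {u \<in> V - D'. E t u}"
        then have "u \<noteq> w" using wn[of t] gsym[OF G] t ts ls by blast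
        moreover have "u \<notin> S" using u SD by blast
        ultimately have "u \<in> V - {w} - S" using u by blast
        then have "u = l t" using SL[OF t(1)] u by blast
        then show "u \<in> {c}" using t by blast
      qed
    qed
    then show False using cnt[OF tD] by simp
  qed
  then show ?thesis using C wV ls unfolding minimal_certified_dominating_def by blast
qed

lemma families_pair:
  assumes G: "graph V E" and n: "card V \<ge> 3"
    and F: "simple_diadem V E \<or> diadem V E \<or> K2_join_indep V E \<or> coK2_join_indep V E"
  shows "\<exists>x y. x \<in> V \<and> y \<in> V \<and> x \<noteq> y \<and> minimal_certified_dominating V E (V - {x, y})"
  using F
proof (elim disjE)
  assume "simple_diadem V E"
  then obtain w S l s where "w \<in> V" "s \<in> S" "corona_with (V - {w}) E S l" "\<forall>u. E w u \<longleftrightarrow> u = s"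
    unfolding simple_diadem_def by blast
  then show ?thesis using dia_pair[OF G] by blast
next
  assume "diadem V E"
  then obtain w S l s where "w \<in> V" "s \<in> S" "corona_with (V - {w}) E S l" "\<forall>u. E w u \<longleftrightarrow> u = s \<or> u = l s"
    unfolding diadem_def by blast
  then show ?thesis using dia_pair[OF G] by blast
next
  assume "K2_join_indep V E"
  then show ?thesis using join_pair[OF G n] unfolding K2_join_indep_def by blast
next
  assume "coK2_join_indep V E"
  then show ?thesis using join_pair[OF G n] unfolding coK2_join_indep_def by blast
qed



lemma closed_reach:
  assumes cl: "\<And>a b. a \<in> C \<Longrightarrow> E a b \<Longrightarrow> b \<in> C" and r: "E\<^sup>*\<^sup>* a b" and a: "a \<in> C"
  shows "b \<in> C"
  using r a by (induction rule: rtranclp_induct) (auto intro: cl)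

lemma pair_families:
  assumes G: "graph V E" and Cn: "connected_graph V E" and n: "card V \<ge> 3"
    and xV: "x \<in> V" and yV: "y \<in> V" and xy: "x \<noteq> y"
    and M: "minimal_certified_dominating V E (V - {x, y})"
  shows "simple_diadem V E \<or> diadem V E \<or> K2_join_indep V E \<or> coK2_join_indep V E"
proof -
  define D where "D = V - {x, y}"
  have fV: "finite V" using gfin[OF G] .
  have fD: "finite D" unfolding D_def using fV by simp
  have C: "certified_dominating V E D" and minD: "\<And>D'. D' \<subset> D \<Longrightarrow> \<not> certified_dominating V E D'"
    using M unfolding minimal_certified_dominating_def D_def by blast+
  have hx: "\<exists>u\<in>D. E u x" and twin0: "\<forall>v\<in>D. E v x \<longleftrightarrow> E v y"
    using C cert_pair[OF G xV yV xy] unfolding D_def by blast+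
  have twin: "\<And>v. v \<in> D \<Longrightarrow> E v y \<longleftrightarrow> E v x" using twin0 by blast
  define N where "N = {v\<in>D. E v x}"
  have ND: "N \<subseteq> D" unfolding N_def by blast
  have Nne: "N \<noteq> {}" using hx unfolding N_def by blast
  have xD: "x \<notin> D" "y \<notin> D" unfolding D_def by auto
  have DV: "D \<subseteq> V" unfolding D_def by blast
  have noxy: "\<And>v u. v \<in> D - N \<Longrightarrow> E v u \<Longrightarrow> u \<in> D"
  proof -
    fix v u assume v: "v \<in> D - N" and e: "E v u"
    have "u \<in> V" using gV2[OF G e] .
    moreover have "u \<noteq> x" using v e unfolding N_def by blast
    moreover have "u \<noteq> y" using v e twin[of v] unfolding N_def by blast
    ultimately show "u \<in> D" unfolding D_def by blast
  qed
  have certW: "certified_dominating V E (D - W)"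
    if W: "W \<subseteq> D" "\<exists>m\<in>N. m \<notin> W" "\<forall>w\<in>W. \<exists>u\<in>D-W. E w u"
      "\<forall>v\<in>D-W-N. card {u\<in>W. E v u} \<noteq> 1" for W
  proof -
    obtain m where m: "m \<in> N" "m \<notin> W" using W(2) by blast
    have mD: "m \<in> D - W" using m ND by blast
    have Emx: "E m x" "E m y" using m twin[of m] ND unfolding N_def by blast+
    have VDW: "V - (D - W) = insert x (insert y W)" using W(1) DV xV yV unfolding D_def by blast
    show ?thesis unfolding certified_dominating_def dominating_def
    proof (intro conjI ballI)
      show "D - W \<subseteq> V" using DV by blast
    next
      fix v assume "v \<in> V - (D - W)"
      then have "v = x \<or> v = y \<or> v \<in> W" using VDW by blast
      then show "\<exists>u\<in>D - W. E u v"
      proof (elim disjE)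
        assume "v = x" then show ?thesis using mD Emx by blast
      next
        assume "v = y" then show ?thesis using mD Emx by blast
      next
        assume "v \<in> W"
        then obtain u where "u \<in> D - W" "E v u" using W(3) by blast
        then show ?thesis using gsym[OF G \<open>E v u\<close>] by blast
      qed
    next
      fix v assume v: "v \<in> D - W"
      have fin: "finite {u \<in> V - (D - W). E v u}" using fV by simp
      show "card {u \<in> V - (D - W). E v u} = 0 \<or> 2 \<le> card {u \<in> V - (D - W). E v u}"
      proof (cases "v \<in> N")
        case True
        then have "E v x" "E v y" using twin[of v] v unfolding N_def by blast+
        then have "{x, y} \<subseteq> {u \<in> V - (D - W). E v u}" using VDW xV yV by blast
        then have "card {x, y} \<le> card {u \<in> V - (D - W). E v u}" using fin card_mono by blast
        then show ?thesis using xy by simp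
      next
        case False
        then have nx: "\<not> E v x" "\<not> E v y" using twin[of v] v unfolding N_def by blast+
        have "{u \<in> V - (D - W). E v u} = {u\<in>W. E v u}"
        proof
          show "{u \<in> V - (D - W). E v u} \<subseteq> {u\<in>W. E v u}" unfolding VDW using nx by blast
          show "{u\<in>W. E v u} \<subseteq> {u \<in> V - (D - W). E v u}" using W(1) DV by blast
        qed
        moreover have "card {u\<in>W. E v u} \<noteq> 1" using W(4) v False by blast
        ultimately show ?thesis by (metis One_nat_def less_2_cases not_le)
      qed
    qed
  qed
  have noW: False
    if W: "W \<subseteq> D" "W \<noteq> {}" "\<exists>m\<in>N. m \<notin> W" "\<forall>w\<in>W. \<exists>u\<in>D-W. E w u"
      "\<forall>v\<in>D-W-N. card {u\<in>W. E v u} \<noteq> 1" for W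
  proof -
    have "D - W \<subset> D" using W(1,2) by blast
    then show False using minD certW[OF W(1) W(3-5)] by blast
  qed
  have symE: "\<forall>a b. E a b \<longrightarrow> E b a" using gsym[OF G] by blast
  have irrE: "\<forall>a. \<not> E a a" using girr[OF G] by blast
  have nomin: "\<forall>W. W \<noteq> {} \<and> W \<subseteq> D - N \<and> (\<forall>w\<in>W. \<exists>u\<in>D-W. E w u) \<longrightarrow>
      (\<exists>v\<in>D-W-N. card {u\<in>W. E v u} = 1)"
  proof (intro allI impI)
    fix W assume W: "W \<noteq> {} \<and> W \<subseteq> D - N \<and> (\<forall>w\<in>W. \<exists>u\<in>D-W. E w u)"
    show "\<exists>v\<in>D-W-N. card {u\<in>W. E v u} = 1"
    proof (rule ccontr)
      assume "\<not> (\<exists>v\<in>D-W-N. card {u\<in>W. E v u} = 1)"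
      then have c: "\<forall>v\<in>D-W-N. card {u\<in>W. E v u} \<noteq> 1" by blast
      have "\<exists>m\<in>N. m \<notin> W" using Nne W by blast
      then show False using noW[of W] W c by blast
    qed
  qed
  obtain S' l' where S': "S' \<subseteq> D - N" and lS': "l' ` S' \<subseteq> D - N - S'" and inj': "inj_on l' S'"
    and leafD: "\<forall>t\<in>S'. \<forall>u\<in>D. E (l' t) u \<longleftrightarrow> u = t"
    and iso: "\<forall>r\<in>D - N - S' - l' ` S'. \<forall>u\<in>D. \<not> E r u"
    using core[OF fD symE irrE nomin] by blast
  have ltD: "\<And>t. t \<in> S' \<Longrightarrow> l' t \<in> D - N - S'" using lS' by blast
  have leafV: "\<And>t u. t \<in> S' \<Longrightarrow> E (l' t) u \<Longrightarrow> u = t"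
  proof -
    fix t u assume t: "t \<in> S'" and e: "E (l' t) u"
    have "u \<in> D" using noxy[OF _ e] ltD[OF t] by blast
    then show "u = t" using leafD t e by blast
  qed
  have leafE: "\<And>t. t \<in> S' \<Longrightarrow> E (l' t) t" using leafD S' by blast
  have Rcov: "D - N = S' \<union> l' ` S'"
  proof
    show "S' \<union> l' ` S' \<subseteq> D - N" using S' lS' by blast
    show "D - N \<subseteq> S' \<union> l' ` S'"
    proof
      fix r assume r: "r \<in> D - N"
      show "r \<in> S' \<union> l' ` S'"
      proof (rule ccontr)
        assume "r \<notin> S' \<union> l' ` S'"
        then have riso: "\<forall>u\<in>D. \<not> E r u" using iso r by blast
        have "E\<^sup>*\<^sup>* r x" using Cn r xV DV unfolding connected_graph_def by blast
        moreover have "r \<noteq> x" using r xD by blast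
        ultimately obtain u where "E r u" by (metis converse_rtranclpE)
        then show False using noxy[OF r] riso by blast
      qed
    qed
  qed
  show ?thesis
  proof (cases "\<exists>e1\<in>N. \<exists>e2\<in>N. e1 \<noteq> e2")
    case True
    have noNR: "\<not> E e r" if e: "e \<in> N" and r: "r \<in> D - N" for e r
    proof
      assume Eer: "E e r"
      have eD: "e \<in> D" using e ND by blast
      have rS: "r \<in> S'"
      proof (rule ccontr)
        assume "r \<notin> S'"
        then obtain t where t: "t \<in> S'" "r = l' t" using Rcov r by blast
        have "e = t" using leafV[OF t(1)] gsym[OF G Eer] t(2) by blast
        then show False using t S' e by blast
      qed
      define T where "T = {t\<in>S'. E e t}"
      define W where "W = insert e (l' ` T)"
      have TS: "T \<subseteq> S'" unfolding T_def by blast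
      have lT: "l' ` T \<subseteq> D - N - S'" using ltD TS by blast
      show False
      proof (rule noW[of W])
        show "W \<subseteq> D" unfolding W_def using eD lT by blast
        show "W \<noteq> {}" unfolding W_def by blast
        obtain e2 where e2: "e2 \<in> N" "e2 \<noteq> e" using True by blast
        then show "\<exists>m\<in>N. m \<notin> W" unfolding W_def using lT by blast
        show "\<forall>w\<in>W. \<exists>u\<in>D-W. E w u"
        proof
          fix w assume "w \<in> W"
          then consider "w = e" | t where "t \<in> T" "w = l' t" unfolding W_def by blast
          then show "\<exists>u\<in>D-W. E w u"
          proof cases
            case 1
            have "r \<in> D - W" unfolding W_def using r rS lT e by blast
            then show ?thesis using Eer 1 by blast
          next
            case 2
            have "t \<in> D - W" unfolding W_def using 2 TS S' lT e by blast
            then show ?thesis using leafE 2 TS by blast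
          qed
        qed
        show "\<forall>v\<in>D-W-N. card {u\<in>W. E v u} \<noteq> 1"
        proof
          fix v assume v: "v \<in> D - W - N"
          then have "v \<in> S' \<union> l' ` S'" using Rcov by blast
          then consider "v \<in> T" | "v \<in> S' - T" | t0 where "t0 \<in> S'" "v = l' t0" by blast
          then show "card {u\<in>W. E v u} \<noteq> 1"
          proof cases
            case 1
            have vS: "v \<in> S'" using 1 TS by blast
            have "{u\<in>W. E v u} = {e, l' v}"
            proof
              show "{u\<in>W. E v u} \<subseteq> {e, l' v}"
              proof
                fix u assume u: "u \<in> {u\<in>W. E v u}"
                then consider "u = e" | t where "t \<in> T" "u = l' t" unfolding W_def by blast
                then show "u \<in> {e, l' v}"
                proof cases
                  case 1 then show ?thesis by blast
                next
                  case 2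
                  have "v = t" using leafV[of t v] 2 TS u gsym[OF G] by blast
                  then show ?thesis using 2 by blast
                qed
              qed
              have "E v e" using 1 gsym[OF G] unfolding T_def by blast
              moreover have "E v (l' v)" using gsym[OF G leafE[OF vS]] .
              moreover have "l' v \<in> W" using 1 unfolding W_def by blast
              ultimately show "{e, l' v} \<subseteq> {u\<in>W. E v u}" unfolding W_def by blast
            qed
            moreover have "e \<noteq> l' v" using ltD[OF vS] e by blast
            ultimately show ?thesis by simp
          next
            case 2
            have "{u\<in>W. E v u} = {}"
            proof (rule ccontr)
              assume "{u\<in>W. E v u} \<noteq> {}"
              then obtain u where u: "u \<in> W" "E v u" by blast
              then consider "u = e" | t where "t \<in> T" "u = l' t" unfolding W_def by blast
              then show False
              proof cases
                case 1
                then have "E e v" using gsym[OF G u(2)] by simp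
                then show False using 2 unfolding T_def by blast
              next
                case 2
                have "v = t" using leafV[of t v] 2 TS u gsym[OF G] by blast
                then show False using 2 \<open>v \<in> S' - T\<close> by blast
              qed
            qed
            then show ?thesis by (metis card.empty zero_neq_one)
          next
            case 3
            have "{u\<in>W. E v u} = {}"
            proof (rule ccontr)
              assume "{u\<in>W. E v u} \<noteq> {}"
              then obtain u where u: "u \<in> W" "E v u" by blast
              then have ut: "u = t0" using leafV[OF 3(1)] 3(2) by blast
              then consider "u = e" | t where "t \<in> T" "u = l' t" using u unfolding W_def by blast
              then show False
              proof cases
                case 1 then show False using ut 3 S' e by blast
              next
                case 2 then show False using ut 3 ltD TS by blast
              qed
            qed
            then show ?thesis by (metis card.empty zero_neq_one)
          qed
        qed
      qed
    qed
    have DN: "D = N"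
    proof (rule ccontr)
      assume "D \<noteq> N"
      then obtain r where r: "r \<in> D - N" using ND by blast
      have cl: "b \<in> D - N" if "a \<in> D - N" "E a b" for a b
      proof -
        have "b \<in> D" using noxy that by blast
        moreover have "b \<notin> N" using noNR[of b a] that gsym[OF G \<open>E a b\<close>] by blast
        ultimately show ?thesis by blast
      qed
      have rx: "E\<^sup>*\<^sup>* r x" using Cn r xV DV unfolding connected_graph_def by blast
      have "x \<in> D - N"
      proof (rule closed_reach[of "D - N" E r x])
        show "\<And>a b. a \<in> D - N \<Longrightarrow> E a b \<Longrightarrow> b \<in> D - N" by (rule cl)
        show "E\<^sup>*\<^sup>* r x" by (rule rx)
        show "r \<in> D - N" by (rule r)
      qed
      then show False using xD by blast
    qed
    have Nind: "\<not> E a b" if "a \<in> N" "b \<in> N" for a b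
    proof
      assume ab: "E a b"
      have "a \<noteq> b" using ab girr[OF G] by blast
      show False
      proof (rule noW[of "{a}"])
        show "{a} \<subseteq> D" using that ND by blast
        show "{a} \<noteq> {}" by blast
        show "\<exists>m\<in>N. m \<notin> {a}" using that(2) \<open>a \<noteq> b\<close> by auto
        show "\<forall>w\<in>{a}. \<exists>u\<in>D - {a}. E w u" using that ND ab \<open>a \<noteq> b\<close> by blast
        show "\<forall>v\<in>D - {a} - N. card {u\<in>{a}. E v u} \<noteq> 1" using DN by blast
      qed
    qed
    have J: "join_with_independent V E {x, y}" unfolding join_with_independent_def
    proof (intro conjI ballI)
      show "{x, y} \<subseteq> V" using xV yV by blast
    next
      fix p q assume p: "p \<in> {x, y}" and q: "q \<in> V - {x, y}"
      then have qN: "q \<in> N" using DN unfolding D_def by blast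
      then have "E q x" "E q y" using twin[of q] ND unfolding N_def by blast+
      then show "E p q" using p gsym[OF G] by blast
    next
      fix p q assume "p \<in> V - {x, y}" "q \<in> V - {x, y}"
      then show "\<not> E p q" using Nind DN unfolding D_def by blast
    qed
    show ?thesis
    proof (cases "E x y")
      case True
      then have "K2_join_indep V E" unfolding K2_join_indep_def using xy J by blast
      then show ?thesis by blast
    next
      case False
      then have "coK2_join_indep V E" unfolding coK2_join_indep_def using xy J by blast
      then show ?thesis by blast
    qed
  next
    case False
    obtain s where sN: "s \<in> N" using Nne by blast
    have Ns: "N = {s}" using False sN by blast
    have sD: "s \<in> D" using sN ND by blast
    have Esx: "E s x" using sN unfolding N_def by blast
    have Esy: "E s y" using twin[OF sD] Esx by blast
    have sS': "s \<notin> S'" using S' sN by blast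
    have DD: "D = insert s (S' \<union> l' ` S')" using Rcov Ns ND by blast
    define S where "S = insert s S'"
    define l where "l = l'(s := y)"
    have lS'eq: "\<And>t. t \<in> S' \<Longrightarrow> l t = l' t" unfolding l_def using sS' by auto
    have ls: "l s = y" unfolding l_def by simp
    have lx: "\<not> E (l' t) x" "\<not> E (l' t) y" if "t \<in> S'" for t
      using leafV[OF that, of x] leafV[OF that, of y] that S' xD by blast+
    have VxS: "V - {x} - S = insert y (l' ` S')"
    proof -
      have e1: "V - {x} = insert y D" unfolding D_def using yV xy by blast
      have d1: "y \<notin> insert s S'" using xD sD S' by blast
      have d2: "l' ` S' \<inter> insert s S' = {}" using lS' sN by blast
      show ?thesis unfolding S_def e1 DD using d1 d2 by auto
    qed
    have lSimg: "l ` S = insert y (l' ` S')" unfolding S_def using lS'eq ls by auto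
    have injl: "inj_on l S" unfolding S_def
    proof (rule inj_on_insert[THEN iffD2], intro conjI)
      show "inj_on l S'" using inj' lS'eq by (metis inj_on_cong)
      show "l s \<notin> l ` (S' - {s})" using ls lS'eq lS' xD by auto
    qed
    have xnb: "E x u \<longleftrightarrow> u = s \<or> (u = y \<and> E x y)" for u
    proof
      assume e: "E x u"
      show "u = s \<or> (u = y \<and> E x y)"
      proof (cases "u = y")
        case True then show ?thesis using e by blast
      next
        case False
        have "u \<in> V" using gV2[OF G e] .
        moreover have "u \<noteq> x" using e girr[OF G] by blast
        ultimately have "u \<in> D" using False unfolding D_def by blast
        then have "u \<in> N" using gsym[OF G e] unfolding N_def by blast
        then show ?thesis using Ns by blast
      qed
    next
      assume "u = s \<or> (u = y \<and> E x y)"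
      then show "E x u" using gsym[OF G Esx] by blast
    qed
    have cor: "corona_with (V - {x}) E S l" unfolding corona_with_def
    proof (intro conjI ballI)
      show "S \<subseteq> V - {x}" unfolding S_def using sD S' DV xD by blast
      show "bij_betw l S (V - {x} - S)" unfolding bij_betw_def using injl lSimg VxS by blast
    next
      fix a b assume a: "a \<in> S" and b: "b \<in> V - {x} - S"
      then have b': "b \<in> insert y (l' ` S')" using VxS by blast
      show "E a b \<longleftrightarrow> b = l a"
      proof (cases "a = s")
        case True
        show ?thesis
        proof (cases "b = y")
          case True then show ?thesis using Esy ls \<open>a = s\<close> by simp
        next
          case False
          then obtain t where t: "t \<in> S'" "b = l' t" using b' by blast
          have "\<not> E s b" using leafV[OF t(1), of s] t sS' gsym[OF G] by blast
          moreover have "b \<noteq> y" using False .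
          ultimately show ?thesis using True ls by simp
        qed
      next
        case False
        then have aS: "a \<in> S'" using a unfolding S_def by blast
        have la: "l a = l' a" using lS'eq[OF aS] .
        show ?thesis
        proof (cases "b = y")
          case True
          have aD: "a \<in> D - N" using aS S' by blast
          have "\<not> E a y" using twin[of a] aD unfolding N_def by blast
          moreover have "l' a \<noteq> y" using ltD[OF aS] xD by blast
          ultimately show ?thesis using True la by simp
        next
          case False
          then obtain t where t: "t \<in> S'" "b = l' t" using b' by blast
          have "E a b \<longleftrightarrow> a = t" using leafV[OF t(1), of a] leafE[OF t(1)] t(2) gsym[OF G] by blast
          also have "\<dots> \<longleftrightarrow> l' a = l' t" using inj' aS t(1) inj_on_eq_iff by metis
          finally show ?thesis using la t(2) by auto
        qed
      qed
    next
      fix a b assume a: "a \<in> V - {x} - S" and b: "b \<in> V - {x} - S"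
      then have a': "a \<in> insert y (l' ` S')" and b': "b \<in> insert y (l' ` S')" using VxS by blast+
      show "\<not> E a b"
      proof
        assume ab: "E a b"
        show False
        proof (cases "a = y")
          case True
          then have "b \<noteq> y" using ab girr[OF G] by blast
          then obtain t where t: "t \<in> S'" "b = l' t" using b' by blast
          then show False using lx[OF t(1)] gsym[OF G ab] True by simp
        next
          case False
          then obtain t where t: "t \<in> S'" "a = l' t" using a' by blast
          have "b = t" using leafV[OF t(1)] ab t(2) by blast
          moreover have "b \<notin> S'"
          proof -
            have "y \<notin> S'" using xD S' by blast
            moreover have "l' ` S' \<inter> S' = {}" using lS' by blast
            ultimately show ?thesis using b' by blast
          qed
          ultimately show False using t by blast
        qed
      qed
    qed
    have sS: "s \<in> S" unfolding S_def by blast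
    show ?thesis
    proof (cases "E x y")
      case True
      have "\<forall>u. E x u \<longleftrightarrow> u = s \<or> u = l s" using xnb True ls by blast
      then have "diadem V E" unfolding diadem_def using xV sS cor by blast
      then show ?thesis by blast
    next
      case False
      have "\<forall>u. E x u \<longleftrightarrow> u = s" using xnb False by blast
      then have "simple_diadem V E" unfolding simple_diadem_def using xV sS cor by blast
      then show ?thesis by blast
    qed
  qed
qed


theorem theorem3p3:
  fixes V :: "'a set" and E :: "'a \<Rightarrow> 'a \<Rightarrow> bool"
  assumes "graph V E" and "connected_graph V E" and "card V \<ge> 3"
  shows "Gamma_cer V E = card V - 2 \<longleftrightarrow>
    simple_diadem V E \<or> diadem V E \<or> K2_join_indep V E \<or> coK2_join_indep V E"
proof -
  have eq: "Gamma_cer V E = card V - 2 \<longleftrightarrow>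
    (\<exists>x y. x \<in> V \<and> y \<in> V \<and> x \<noteq> y \<and> minimal_certified_dominating V E (V - {x, y}))"
    using Gamma_iff[OF assms(1,3)] pair_iff[OF assms(1,3)] by simp
  show ?thesis
  proof
    assume "Gamma_cer V E = card V - 2"
    then obtain x y where "x \<in> V" "y \<in> V" "x \<noteq> y" "minimal_certified_dominating V E (V - {x, y})"
      using eq by blast
    then show "simple_diadem V E \<or> diadem V E \<or> K2_join_indep V E \<or> coK2_join_indep V E"
      using pair_families[OF assms] by blast
  next
    assume "simple_diadem V E \<or> diadem V E \<or> K2_join_indep V E \<or> coK2_join_indep V E"
    then show "Gamma_cer V E = card V - 2" using eq families_pair[OF assms(1,3)] by blast
  qed
qed

end
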